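(* Let $r_1,\dots,r_N$ be positive numbers. If $f\colon\mathbb{R}^n\to\mathbb{R}^{N\times N}$ is a continuous function of positive type such that (i) $f(x)_{ij}\le 0$ whenever $\|x\|\ge r_i+r_j$, and (ii) $f(x)_{ij}\le -1$ whenever $\|x\|=r_i+r_j$, then the average degree of the contact graph of any packing of balls in $\mathbb{R}^n$ all of whose radii belong to $\{r_1,\dots,r_N\}$ is at most $\max\{f(0)_{ii}: i=1,\dots,N\}$.
   Context: A continuous $f\colon\mathbb{R}^n\to\mathbb{R}^{N\times N}$ is of positive type if for every finite set $U\subseteq\mathbb{R}^n$ the block matrix $(f(x-y))_{x,y\in U}$ (of size $N|U|\times N|U|$) is positive semidefinite. A packing of balls is a finite set of closed balls with pairwise disjoint interiors; its contact graph has the balls as vertices, two distinct balls adjacent iff they are tangent. The average degree of a graph $(V,E)$ is $2|E|/|V|$. *)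

theory Defs
  imports "HOL-Analysis.Analysis"
begin

text \<open>Matrix-valued functions on R^n: f :: real^'n => real^'m^'m, where 'm indexes {1..N}.
  f is of positive type: for every finite U the block matrix (f(x-y))_{x,y in U}
  (rows indexed by (x,i), columns by (y,j)) is positive semidefinite, i.e. symmetric
  with nonnegative quadratic form.\<close>

definition positive_type :: "(real^'n \<Rightarrow> real^'m^'m) \<Rightarrow> bool" where
  "positive_type f \<longleftrightarrow>
     (\<forall>U. finite U \<longrightarrow>
        (\<forall>x\<in>U. \<forall>y\<in>U. \<forall>i j. f (x - y) $ i $ j = f (y - x) $ j $ i) \<and>
        (\<forall>c :: real^'n \<Rightarrow> 'm \<Rightarrow> real.
           0 \<le> (\<Sum>x\<in>U. \<Sum>y\<in>U. \<Sum>i\<in>UNIV. \<Sum>j\<in>UNIV. c x i * f (x - y) $ i $ j * c y j)))"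

text \<open>A ball is represented by (center, radius). A packing is a finite set of closed
  balls of positive radius with pairwise disjoint interiors.\<close>

definition ball_packing :: "((real^'n) \<times> real) set \<Rightarrow> bool" where
  "ball_packing P \<longleftrightarrow> finite P \<and> (\<forall>(c, \<rho>)\<in>P. 0 < \<rho>) \<and>
     (\<forall>(c, \<rho>)\<in>P. \<forall>(d, \<sigma>)\<in>P. (c, \<rho>) \<noteq> (d, \<sigma>) \<longrightarrow>
        interior (cball c \<rho>) \<inter> interior (cball d \<sigma>) = {})"

text \<open>Two balls (with disjoint interiors) are tangent iff they touch.\<close>

definition tangent :: "(real^'n) \<times> real \<Rightarrow> (real^'n) \<times> real \<Rightarrow> bool" where
  "tangent B B' \<longleftrightarrow> B \<noteq> B' \<and> cball (fst B) (snd B) \<inter> cball (fst B') (snd B') \<noteq> {}"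

definition contact_edges :: "((real^'n) \<times> real) set \<Rightarrow> ((real^'n) \<times> real) set set" where
  "contact_edges P = {{B, B'} | B B'. B \<in> P \<and> B' \<in> P \<and> B \<noteq> B' \<and> tangent B B'}"

definition average_degree :: "((real^'n) \<times> real) set \<Rightarrow> real" where
  "average_degree P = 2 * real (card (contact_edges P)) / real (card P)"

end

theory Submission imports Defs begin

lemma sep:
  fixes c d :: "real^'n"
  assumes "0 < \<rho>" "0 < \<sigma>" "ball c \<rho> \<inter> ball d \<sigma> = {}"
  shows "\<rho> + \<sigma> \<le> dist c d"
proof (rule ccontr)
  assume h: "\<not> \<rho> + \<sigma> \<le> dist c d"
  define p where "p = c + (\<rho>/(\<rho>+\<sigma>)) *\<^sub>R (d - c)"
  have "dist c p = \<rho>/(\<rho>+\<sigma>) * dist c d"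
    using assms by (simp add: p_def dist_norm dist_commute norm_minus_commute)
  also have "\<dots> < \<rho>" using h assms mult_strict_left_mono[of "dist c d" "\<rho>+\<sigma>" \<rho>] by (simp add: field_simps distrib_left)
  finally have 1: "p \<in> ball c \<rho>" by simp
  have "d - p = (\<sigma>/(\<rho>+\<sigma>)) *\<^sub>R (d - c)"
  proof -
    have k: "\<rho>/(\<rho>+\<sigma>) = 1 - \<sigma>/(\<rho>+\<sigma>)" using assms by (simp add: field_simps)
    show ?thesis unfolding p_def k by (simp add: algebra_simps)
  qed
  hence "dist p d = \<sigma>/(\<rho>+\<sigma>) * dist c d"
    using assms by (simp add: dist_norm norm_minus_commute)
  also have "\<dots> < \<sigma>" using h assms mult_strict_left_mono[of "dist c d" "\<rho>+\<sigma>" \<sigma>] by (simp add: field_simps distrib_left)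
  finally have 2: "p \<in> ball d \<sigma>" by (simp add: dist_commute)
  from 1 2 assms(3) show False by blast
qed

lemma touch:
  fixes c d :: "real^'n"
  assumes "cball c \<rho> \<inter> cball d \<sigma> \<noteq> {}"
  shows "dist c d \<le> \<rho> + \<sigma>"
proof -
  obtain p where "dist c p \<le> \<rho>" "dist d p \<le> \<sigma>" using assms by auto
  thus ?thesis using dist_triangle[of c d p] by (simp add: dist_commute)
qed

lemma sel_sum:
  fixes A :: "real^'m::finite^'m"
  shows "(\<Sum>i\<in>UNIV. \<Sum>j\<in>UNIV. (if i = k then 1 else 0) * A $ i $ j * (if j = l then 1 else 0)) = A $ k $ l"
  proof -
  have "(\<Sum>j\<in>UNIV. (if i = k then 1 else 0) * A $ i $ j * (if j = l then 1 else 0)) = (if i = k then A $ i $ l else 0)" for i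
  proof (cases "i = k")
    case True
    have "(\<Sum>j\<in>UNIV. A $ k $ j * (if j = l then 1 else 0)) = (\<Sum>j\<in>UNIV. if j = l then A$k$j else 0)"
      by (rule sum.cong) auto
    thus ?thesis using True by simp
  qed simp
  thus ?thesis by simp
qed

lemma count_edges:
  fixes P :: "((real^'n) \<times> real) set"
  assumes "finite P"
  shows "(\<Sum>B\<in>P. real (card {B'\<in>P. tangent B B'})) = 2 * real (card (contact_edges P))"
proof -
  let ?E = "contact_edges P"
  have tsym: "tangent a b \<Longrightarrow> tangent b a" for a b :: "(real^'n) \<times> real"
    unfolding tangent_def by blast
  have finE: "finite ?E"
  proof -
    have "?E \<subseteq> Pow P" unfolding contact_edges_def by auto
    thus ?thesis using assms by (meson finite_Pow_iff finite_subset)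
  qed
  have im: "{e\<in>?E. B \<in> e} = (\<lambda>B'. {B,B'}) ` {B'\<in>P. tangent B B'}" if "B \<in> P" for B
  proof
    show "{e\<in>?E. B \<in> e} \<subseteq> (\<lambda>B'. {B,B'}) ` {B'\<in>P. tangent B B'}"
    proof
      fix e assume "e \<in> {e\<in>?E. B \<in> e}"
      then obtain a b where e: "e = {a,b}" "a \<in> P" "b \<in> P" "tangent a b" "B \<in> e"
        unfolding contact_edges_def by auto
      show "e \<in> (\<lambda>B'. {B,B'}) ` {B'\<in>P. tangent B B'}"
      proof (cases "B = a")
        case True thus ?thesis using e by auto
      next
        case False
        hence "B = b" using e by auto
        thus ?thesis using e tsym[of a b] by (auto intro!: image_eqI[where x=a])
      qed
    qed
  next
    show "(\<lambda>B'. {B,B'}) ` {B'\<in>P. tangent B B'} \<subseteq> {e\<in>?E. B \<in> e}"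
    proof
      fix e assume "e \<in> (\<lambda>B'. {B,B'}) ` {B'\<in>P. tangent B B'}"
      then obtain B' where "e = {B,B'}" "B' \<in> P" "tangent B B'" by auto
      moreover have "B \<noteq> B'" using \<open>tangent B B'\<close> unfolding tangent_def by simp
      ultimately have "e \<in> ?E" using that unfolding contact_edges_def
        by (intro CollectI exI[of _ B] exI[of _ B']) simp
      thus "e \<in> {e\<in>?E. B \<in> e}" using \<open>e = {B,B'}\<close> by simp
    qed
  qed
  have inj: "inj_on (\<lambda>B'. {B,B'}) X" for B :: "(real^'n) \<times> real" and X
    by (auto simp: inj_on_def doubleton_eq_iff)
  have c1: "card {B'\<in>P. tangent B B'} = card {e\<in>?E. B \<in> e}" if "B \<in> P" for B
    using im[OF that] card_image[OF inj] by simp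
  have c2: "\<forall>e\<in>?E. card {B\<in>P. B \<in> e} = 2"
  proof
    fix e assume "e \<in> ?E"
    then obtain a b where e: "e = {a,b}" "a \<in> P" "b \<in> P" "a \<noteq> b"
      unfolding contact_edges_def by auto
    hence "{B\<in>P. B \<in> e} = {a,b}" by auto
    thus "card {B\<in>P. B \<in> e} = 2" using e by simp
  qed
  have "(\<Sum>B\<in>P. card {B'\<in>P. tangent B B'}) = (\<Sum>B\<in>P. card {e\<in>?E. B \<in> e})"
    using c1 by (rule sum.cong[OF refl])
  also have "\<dots> = 2 * card ?E"
    using sum_multicount[OF assms finE c2] by simp
  finally have "(\<Sum>B\<in>P. card {B'\<in>P. tangent B B'}) = 2 * card ?E" .
  hence "real (\<Sum>B\<in>P. card {B'\<in>P. tangent B B'}) = real (2 * card ?E)" by simp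
  thus ?thesis by (simp only: of_nat_sum of_nat_mult)
qed

lemma pt_ineq:
  assumes "positive_type f" "finite U"
  shows "0 \<le> (\<Sum>x\<in>U. \<Sum>y\<in>U. \<Sum>i\<in>UNIV. \<Sum>j\<in>UNIV. c x i * f (x - y) $ i $ j * c y j)"
  using assms unfolding positive_type_def by blast

lemma pack_sep:
  fixes P :: "((real^'n) \<times> real) set"
  assumes "ball_packing P" "B \<in> P" "B' \<in> P" "B \<noteq> B'"
  shows "snd B + snd B' \<le> dist (fst B) (fst B')"
proof -
  obtain c \<rho> where B: "B = (c, \<rho>)" by (cases B)
  obtain d \<sigma> where B': "B' = (d, \<sigma>)" by (cases B')
  have pos: "\<forall>(c, \<rho>)\<in>P. 0 < \<rho>" and dis: "\<forall>(c, \<rho>)\<in>P. \<forall>(d, \<sigma>)\<in>P. (c, \<rho>) \<noteq> (d, \<sigma>) \<longrightarrow>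
        interior (cball c \<rho>) \<inter> interior (cball d \<sigma>) = {}"
    using assms(1) unfolding ball_packing_def by auto
  have "0 < \<rho>" using pos assms(2) B by auto
  moreover have "0 < \<sigma>" using pos assms(3) B' by auto
  moreover have "ball c \<rho> \<inter> ball d \<sigma> = {}"
  proof -
    have h1: "\<forall>(d, \<sigma>)\<in>P. (c, \<rho>) \<noteq> (d, \<sigma>) \<longrightarrow>
        interior (cball c \<rho>) \<inter> interior (cball d \<sigma>) = {}"
      using bspec[OF dis assms(2)[unfolded B]] by simp
    have "(c, \<rho>) \<noteq> (d, \<sigma>) \<longrightarrow> interior (cball c \<rho>) \<inter> interior (cball d \<sigma>) = {}"
      using bspec[OF h1 assms(3)[unfolded B']] by simp
    thus ?thesis using assms(4) B B' by simp
  qed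
  ultimately show ?thesis using sep[of \<rho> \<sigma> c d] B B' by simp
qed

theorem theorem4p1:
  fixes r :: "'m::finite \<Rightarrow> real"
    and f :: "real^'n \<Rightarrow> real^'m^'m"
    and P :: "((real^'n) \<times> real) set"
  assumes r_pos: "\<And>i. 0 < r i"
    and f_cont: "continuous_on UNIV f"
    and f_pos: "positive_type f"
    and f_i: "\<And>x i j. norm x \<ge> r i + r j \<Longrightarrow> f x $ i $ j \<le> 0"
    and f_ii: "\<And>x i j. norm x = r i + r j \<Longrightarrow> f x $ i $ j \<le> -1"
    and P_pack: "ball_packing P"
    and P_radii: "\<forall>B\<in>P. \<exists>i. snd B = r i"
  shows "average_degree P \<le> Max (range (\<lambda>i. f 0 $ i $ i))"
proof -
  define M where "M = Max (range (\<lambda>i. f 0 $ i $ i))"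
  have M_ge: "f 0 $ i $ i \<le> M" for i unfolding M_def by (rule Max_ge) auto
  have diag: "0 \<le> f 0 $ i $ i" for i
  proof -
    have "0 \<le> (\<Sum>x\<in>{0::real^'n}. \<Sum>y\<in>{0}. \<Sum>k\<in>UNIV. \<Sum>l\<in>UNIV.
       (\<lambda>x k. if k = i then 1 else 0) x k * f (x - y) $ k $ l * (\<lambda>x k. if k = i then 1 else 0) y l)"
      by (rule pt_ineq[OF f_pos]) simp
    thus ?thesis using sel_sum[of i "f 0" i] by simp
  qed
  have M0: "0 \<le> M" using diag[of undefined] M_ge[of undefined] by linarith
  have finP: "finite P" using P_pack unfolding ball_packing_def by blast
  define idx where "idx B = (SOME i. snd B = r i)" for B :: "(real^'n) \<times> real"
  have idx: "snd B = r (idx B)" if BP: "B \<in> P" for B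
  proof -
    obtain i where "snd B = r i" using P_radii BP by blast
    thus ?thesis unfolding idx_def by (rule someI[of "\<lambda>i. snd B = r i"])
  qed
  have sepP: "snd B + snd B' \<le> dist (fst B) (fst B')" if "B \<in> P" "B' \<in> P" "B \<noteq> B'" for B B'
    using pack_sep[OF P_pack that] .
  have injP: "inj_on fst P"
  proof (rule inj_onI)
    fix B B' assume h: "B \<in> P" "B' \<in> P" "fst B = fst B'"
    show "B = B'"
    proof (rule ccontr)
      assume "B \<noteq> B'"
      hence "snd B + snd B' \<le> 0" using sepP[OF h(1,2)] h(3) by simp
      moreover have "0 < snd B" "0 < snd B'" using idx h r_pos by auto
      ultimately show False by simp
    qed
  qed
  define g where "g B B' = f (fst B - fst B') $ idx B $ idx B'" for B B'
  define b where "b = inv_into P fst"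
  define c where "c x k = (if k = idx (b x) then 1 else 0 :: real)" for x k
  have "0 \<le> (\<Sum>x\<in>fst ` P. \<Sum>y\<in>fst ` P. \<Sum>i\<in>UNIV. \<Sum>j\<in>UNIV. c x i * f (x - y) $ i $ j * c y j)"
    by (rule pt_ineq[OF f_pos finite_imageI[OF finP]])
  also have "\<dots> = (\<Sum>x\<in>fst ` P. \<Sum>y\<in>fst ` P. f (x - y) $ idx (b x) $ idx (b y))"
    unfolding c_def by (rule sum.cong[OF refl], rule sum.cong[OF refl], rule sel_sum)
  also have "\<dots> = (\<Sum>B\<in>P. \<Sum>B'\<in>P. g B B')"
    unfolding g_def b_def by (simp add: sum.reindex[OF injP] inv_into_f_f[OF injP])
  finally have S0: "0 \<le> (\<Sum>B\<in>P. \<Sum>B'\<in>P. g B B')" .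
  have rowb: "(\<Sum>B'\<in>P. g B B') \<le> M - real (card {B'\<in>P. tangent B B'})" if BP: "B \<in> P" for B
  proof -
    have "(\<Sum>B'\<in>P. g B B') = g B B + (\<Sum>B'\<in>P - {B}. g B B')"
      using finP BP by (simp add: sum.remove)
    also have "(\<Sum>B'\<in>P - {B}. g B B') \<le> (\<Sum>B'\<in>P - {B}. if tangent B B' then -1 else 0)"
    proof (rule sum_mono)
      fix B' assume B': "B' \<in> P - {B}"
      have s: "r (idx B) + r (idx B') \<le> norm (fst B - fst B')"
        using sepP[of B B'] B' BP idx[of B] idx[of B'] by (auto simp: dist_norm)
      show "g B B' \<le> (if tangent B B' then -1 else 0)"
      proof (cases "tangent B B'")
        case True
        hence "dist (fst B) (fst B') \<le> snd B + snd B'"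
          using touch[of "fst B" "snd B" "fst B'" "snd B'"] True unfolding tangent_def by blast
        hence "norm (fst B - fst B') = r (idx B) + r (idx B')"
          using s idx[OF BP] idx[of B'] B' by (simp add: dist_norm)
        thus ?thesis using True f_ii unfolding g_def by simp
      next
        case False
        thus ?thesis using f_i[OF s] unfolding g_def by simp
      qed
    qed
    also have "(\<Sum>B'\<in>P - {B}. if tangent B B' then -1 else 0) = - real (card {B'\<in>P. tangent B B'})"
    proof -
      have "{B'\<in>P. tangent B B'} = (P - {B}) \<inter> Collect (tangent B)" unfolding tangent_def by auto
      thus ?thesis using finP by (simp add: sum.If_cases)
    qed
    finally show ?thesis using M_ge[of "idx B"] unfolding g_def by simp
  qed
  have "0 \<le> (\<Sum>B\<in>P. M - real (card {B'\<in>P. tangent B B'}))"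
    using S0 sum_mono[of P "\<lambda>B. \<Sum>B'\<in>P. g B B'"] rowb by (meson order_trans)
  also have "\<dots> = real (card P) * M - 2 * real (card (contact_edges P))"
    using count_edges[OF finP] by (simp add: sum_subtractf)
  finally have key: "2 * real (card (contact_edges P)) \<le> real (card P) * M" by simp
  show ?thesis
  proof (cases "card P = 0")
    case True thus ?thesis using M0 unfolding average_degree_def M_def by simp
  next
    case False
    thus ?thesis using key unfolding average_degree_def M_def[symmetric]
      by (simp add: divide_le_eq mult.commute)
  qed
qed

end
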